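(* Let $\varphi$ be an endomorphism of $F_n$ and $K=\max\{|a\varphi|: a\in A\cup A^{-1}\}$. If $\varphi$ is almost length-increasing, then $|u\varphi|\geq|u|-K$ for every $u\in F_n$.
   Context: $F_n$ is the free group on a finite basis $A$; elements are reduced words over $A\cup A^{-1}$ and $|u|$ is the length; maps are written on the right. An endomorphism $\varphi$ is almost length-increasing if $|u\varphi|<|u|$ for only finitely many $u\in F_n$. *)

theory Defs
  imports Main
begin

text \<open>A letter is a pair (a, e) with a a basis
element and e = True meaning the formal inverse a^-1. Elements of F(A) are
reduced words over these letters; maps are written on the right in the paper,
here as ordinary functions on words.\<close>

type_synonym 'a letter = "'a \<times> bool"

fun inv_letter :: "'a letter \<Rightarrow> 'a letter" where
  "inv_letter (a, e) = (a, \<not> e)"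

fun reduced :: "'a letter list \<Rightarrow> bool" where
  "reduced (x # y # xs) = (y \<noteq> inv_letter x \<and> reduced (y # xs))"
| "reduced _ = True"

fun red :: "'a letter list \<Rightarrow> 'a letter list" where
  "red [] = []"
| "red (x # xs) = (case red xs of
       [] \<Rightarrow> [x]
     | y # ys \<Rightarrow> (if y = inv_letter x then ys else x # y # ys))"

definition FG :: "'a set \<Rightarrow> 'a letter list set" where
  "FG A = {w. set w \<subseteq> A \<times> UNIV \<and> reduced w}"

definition fg_mult :: "'a letter list \<Rightarrow> 'a letter list \<Rightarrow> 'a letter list" where
  "fg_mult u v = red (u @ v)"

definition fg_endo :: "'a set \<Rightarrow> ('a letter list \<Rightarrow> 'a letter list) \<Rightarrow> bool" where
  "fg_endo A \<phi> \<longleftrightarrow> (\<forall>u\<in>FG A. \<phi> u \<in> FG A) \<and>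
     (\<forall>u\<in>FG A. \<forall>v\<in>FG A. \<phi> (fg_mult u v) = fg_mult (\<phi> u) (\<phi> v))"

definition almost_length_increasing ::
  "'a set \<Rightarrow> ('a letter list \<Rightarrow> 'a letter list) \<Rightarrow> bool" where
  "almost_length_increasing A \<phi> \<longleftrightarrow> finite {u \<in> FG A. length (\<phi> u) < length u}"

end

theory Submission
  imports Defs
begin

lemma red_len: "length (red w) \<le> length w"
proof (induction w)
  case (Cons x xs)
  then show ?case by (auto split: list.splits)
qed simp

lemma reduced_tail: "reduced (x # xs) \<Longrightarrow> reduced xs"
  by (cases xs) auto

lemma red_reduced: "reduced w \<Longrightarrow> red w = w"
proof (induction w)
  case (Cons x xs)
  then have "red xs = xs" using reduced_tail by blast
  with Cons.prems show ?case by (cases xs) auto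
qed simp

lemma reduced_append:
  "reduced (xs @ ys) \<longleftrightarrow> reduced xs \<and> reduced ys \<and>
     (xs = [] \<or> ys = [] \<or> hd ys \<noteq> inv_letter (last xs))"
proof (induction xs)
  case Nil then show ?case by simp
next
  case (Cons a xs)
  show ?case
  proof (cases xs)
    case Nil
    then show ?thesis by (cases ys) auto
  next
    case (Cons b zs)
    then show ?thesis using Cons.IH by auto
  qed
qed

lemma inv_inv: "inv_letter (inv_letter x) = x"
  by (cases x) auto

lemma inv_neq: "inv_letter x \<noteq> x"
  by (cases x) auto

lemma const_word:
  "reduced (x # xs) \<Longrightarrow> set xs \<subseteq> {x, inv_letter x} \<Longrightarrow> set xs \<subseteq> {x}"
proof (induction xs)
  case (Cons y ys)
  then have "y = x" by auto
  with Cons show ?case by auto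
qed simp

lemma no_other_letter:
  assumes "reduced u" "u \<noteq> []" "hd u = inv_letter (last u)"
  shows "\<exists>y\<in>set u. y \<noteq> hd u \<and> y \<noteq> last u"
proof (rule ccontr)
  assume "\<not> ?thesis"
  then have s: "set u \<subseteq> {hd u, last u}" by auto
  obtain x xs where u: "u = x # xs" using assms(2) by (cases u) auto
  have "x = inv_letter (last u)" using assms(3) u by simp
  then have "inv_letter x = last u" by (simp add: inv_inv)
  then have "last u = inv_letter x" by simp
  then have "set xs \<subseteq> {x, inv_letter x}" using s u by auto
  then have "set xs \<subseteq> {x}" using const_word assms(1) u by blast
  then have "last u = x" using u
    by (cases "xs = []") (auto dest: last_in_set)
  then show False using \<open>last u = inv_letter x\<close> inv_neq[of x] by simp
qed

lemma FG_append:
  "xs @ ys \<in> FG A \<Longrightarrow> xs \<in> FG A"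
  unfolding FG_def using reduced_append by auto

lemma max_len:
  assumes "finite S" "S \<noteq> {}"
  shows "\<exists>u\<in>S. \<forall>v\<in>S. length v \<le> length (u::'b list)"
proof -
  have "Max (length ` S) \<in> length ` S" using assms by auto
  then obtain u where "u \<in> S" "length u = Max (length ` S)" by auto
  moreover have "length v \<le> Max (length ` S)" if "v \<in> S" for v
    by (rule Max_ge) (use assms that in auto)
  ultimately show ?thesis by metis
qed

theorem mainTheorem12:
  fixes A :: "'a set" and \<phi> :: "'a letter list \<Rightarrow> 'a letter list"
  assumes "finite A"
    and "fg_endo A \<phi>"
    and "almost_length_increasing A \<phi>"
  shows "\<forall>u \<in> FG A. int (length (\<phi> u)) \<ge>
           int (length u) - int (Max {length (\<phi> [x]) | x. x \<in> A \<times> UNIV})"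
proof (rule ccontr)
  define K where "K = Max {length (\<phi> [x]) | x. x \<in> A \<times> UNIV}"
  have fin: "finite {length (\<phi> [x]) | x. x \<in> A \<times> UNIV}"
  proof -
    have "{length (\<phi> [x]) | x. x \<in> A \<times> UNIV} = (\<lambda>x. length (\<phi> [x])) ` (A \<times> UNIV)" by auto
    then show ?thesis using assms(1) by simp
  qed
  have Kx: "length (\<phi> [x]) \<le> K" if "x \<in> A \<times> UNIV" for x
    unfolding K_def using fin that by (intro Max_ge) auto
  have inFG: "\<phi> u \<in> FG A" if "u \<in> FG A" for u
    using assms(2) that unfolding fg_endo_def by auto
  have mult: "length (\<phi> (u @ v)) \<le> length (\<phi> u) + length (\<phi> v)"
    if "u @ v \<in> FG A" for u v
  proof -
    have u: "u \<in> FG A" and v: "v \<in> FG A" using that unfolding FG_def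
      using reduced_append by auto
    have "fg_mult u v = u @ v" unfolding fg_mult_def
      using that red_reduced unfolding FG_def by auto
    then have "\<phi> (u @ v) = fg_mult (\<phi> u) (\<phi> v)"
      using assms(2) u v unfolding fg_endo_def by metis
    then show ?thesis unfolding fg_mult_def using red_len
      by (metis length_append)
  qed
  define S where "S = {u \<in> FG A. length (\<phi> u) + K < length u}"
  assume "\<not> ?thesis"
  then have "S \<noteq> {}" unfolding S_def K_def by auto
  moreover have "finite S"
    using assms(3) unfolding almost_length_increasing_def S_def
    by (rule rev_finite_subset) auto
  ultimately obtain u where uS: "u \<in> S" and umax: "\<forall>v\<in>S. length v \<le> length u"
    using max_len by blast
  have uFG: "u \<in> FG A" and ub: "length (\<phi> u) + K < length u" using uS S_def by auto
  then have une: "u \<noteq> []" by auto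
  have ured: "reduced u" and uset: "set u \<subseteq> A \<times> UNIV" using uFG FG_def by auto
  show False
  proof (cases "hd u = inv_letter (last u)")
    case False
    have uu: "u @ u \<in> FG A" using uFG False une unfolding FG_def
      by (auto simp: reduced_append)
    have "length (\<phi> (u @ u)) \<le> 2 * length (\<phi> u)" using mult[OF uu] by simp
    then have "u @ u \<in> S" using uu ub unfolding S_def by auto
    then show False using umax une by fastforce
  next
    case True
    obtain y where y: "y \<in> set u" "y \<noteq> hd u" "y \<noteq> last u"
      using no_other_letter[OF ured une True] by blast
    have yA: "y \<in> A \<times> UNIV" using y uset by auto
    have h1: "hd u \<noteq> inv_letter y"
    proof
      assume "hd u = inv_letter y"
      then have "inv_letter (inv_letter (last u)) = inv_letter (inv_letter y)" using True by simp
      then show False using y(3) by (simp add: inv_inv)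
    qed
    have h2: "y \<noteq> inv_letter (last u)" using y(2) True by simp
    have r1: "reduced (u @ [y])" using ured une h2 by (simp add: reduced_append)
    have r2: "reduced ((u @ [y]) @ u)" using r1 ured une h1
      by (simp only: reduced_append) simp
    have w: "(u @ [y]) @ u \<in> FG A" using uset yA r2 unfolding FG_def by auto
    have w1: "u @ [y] \<in> FG A" using FG_append[OF w] .
    have "length (\<phi> ((u @ [y]) @ u)) \<le> length (\<phi> (u @ [y])) + length (\<phi> u)"
      using mult[OF w] .
    moreover have "length (\<phi> (u @ [y])) \<le> length (\<phi> u) + length (\<phi> [y])"
      using mult[OF w1] .
    moreover have "length (\<phi> [y]) \<le> K" using Kx yA .
    ultimately have "(u @ [y]) @ u \<in> S" using w ub unfolding S_def by auto
    then show False using umax une by fastforce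
  qed
qed

end
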